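(* Every bipartite TRVG with respect to the torus on $n$ vertices has at most $2n$ edges. Moreover, this bound is best possible for $n\ge 8$: for every $n\ge 8$ there exists a bipartite TRVG with respect to the torus on $n$ vertices with exactly $2n$ edges.
   Context: View the torus as an axis-parallel rectangle $[0,W]\times[0,H]$ with opposite sides identified. Horizontal lines $y=c$ and vertical lines $x=c$ are then closed curves on the torus. A graph $G$ is a TRVG with respect to the torus if its vertices can be represented by a collection of pairwise non-overlapping axis-parallel rectangles on this torus (a rectangle may wrap across the identified sides), one per vertex, such that two distinct vertices are adjacent if and only if some horizontal or vertical line of the torus intersects the interiors of both of their rectangles (other rectangles do not block visibility). *)

theory Defs
  imports Complex_Main
begin

text \<open>The torus is the rectangle [0,W] x [0,H] with opposite sides identified; we model
  subsets of the torus as subsets of the plane that are periodic with periods W and H.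
  A rectangle on the torus is given by (a, l, b, m): it is the image of the closed
  rectangle [a, a+l] x [b, b+m] (with 0 < l < W, 0 < m < H, so it may wrap across the
  identified sides).\<close>

type_synonym rect = "real \<times> real \<times> real \<times> real"

definition rect_interior :: "real \<Rightarrow> real \<Rightarrow> rect \<Rightarrow> (real \<times> real) set" where
  "rect_interior W H r = (case r of (a, l, b, m) \<Rightarrow>
     {(x, y). \<exists>i j :: int. a < x - of_int i * W \<and> x - of_int i * W < a + l
                        \<and> b < y - of_int j * H \<and> y - of_int j * H < b + m})"

definition valid_rect :: "real \<Rightarrow> real \<Rightarrow> rect \<Rightarrow> bool" where
  "valid_rect W H r = (case r of (a, l, b, m) \<Rightarrow> 0 < l \<and> l < W \<and> 0 < m \<and> m < H)"

definition hline :: "real \<Rightarrow> real \<Rightarrow> (real \<times> real) set" where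
  "hline H c = {(x, y). \<exists>j :: int. y = c + of_int j * H}"

definition vline :: "real \<Rightarrow> real \<Rightarrow> (real \<times> real) set" where
  "vline W c = {(x, y). \<exists>i :: int. x = c + of_int i * W}"

definition simple_graph :: "'a set \<Rightarrow> ('a \<Rightarrow> 'a \<Rightarrow> bool) \<Rightarrow> bool" where
  "simple_graph V E = (finite V \<and> (\<forall>u v. E u v \<longrightarrow> u \<in> V \<and> v \<in> V \<and> u \<noteq> v \<and> E v u))"

definition edges :: "'a set \<Rightarrow> ('a \<Rightarrow> 'a \<Rightarrow> bool) \<Rightarrow> 'a set set" where
  "edges V E = {{u, v} | u v. u \<in> V \<and> v \<in> V \<and> E u v}"

definition bipartite :: "'a set \<Rightarrow> ('a \<Rightarrow> 'a \<Rightarrow> bool) \<Rightarrow> bool" where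
  "bipartite V E = (\<exists>A. A \<subseteq> V \<and> (\<forall>u\<in>V. \<forall>v\<in>V. E u v \<longrightarrow> (u \<in> A \<longleftrightarrow> v \<notin> A)))"

definition torus_rvg :: "'a set \<Rightarrow> ('a \<Rightarrow> 'a \<Rightarrow> bool) \<Rightarrow> bool" where
  "torus_rvg V E = (\<exists>(W::real) (H::real) (R :: 'a \<Rightarrow> rect).
      0 < W \<and> 0 < H \<and>
      (\<forall>v\<in>V. valid_rect W H (R v)) \<and>
      (\<forall>u\<in>V. \<forall>v\<in>V. u \<noteq> v \<longrightarrow> rect_interior W H (R u) \<inter> rect_interior W H (R v) = {}) \<and>
      (\<forall>u\<in>V. \<forall>v\<in>V. u \<noteq> v \<longrightarrow>
         (E u v \<longleftrightarrow>
           (\<exists>c. (hline H c \<inter> rect_interior W H (R u) \<noteq> {} \<and> hline H c \<inter> rect_interior W H (R v) \<noteq> {})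
              \<or> (vline W c \<inter> rect_interior W H (R u) \<noteq> {} \<and> vline W c \<inter> rect_interior W H (R v) \<noteq> {})))))"

end

theory Submission
  imports Defs
begin


definition Parc :: "real \<Rightarrow> real \<Rightarrow> real \<Rightarrow> real set" where
  "Parc W a l = {x. \<exists>i::int. a < x - of_int i * W \<and> x - of_int i * W < a + l}"

definition st :: "real \<Rightarrow> real \<Rightarrow> real \<Rightarrow> real \<Rightarrow> bool" where
  "st W a1 a2 l2 = (\<exists>i::int. a2 \<le> a1 - of_int i * W \<and> a1 - of_int i * W < a2 + l2)"

lemma arc_lemma:
  assumes "c \<in> Parc W a1 l1" "c \<in> Parc W a2 l2"
  shows "st W a1 a2 l2 \<or> st W a2 a1 l1"
proof -
  obtain i j :: int where i: "a1 < c - of_int i * W" "c - of_int i * W < a1 + l1"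
    and j: "a2 < c - of_int j * W" "c - of_int j * W < a2 + l2"
    using assms unfolding Parc_def by auto
  show ?thesis
  proof (cases "c - of_int i * W - a1 \<le> c - of_int j * W - a2")
    case True
    have "a2 \<le> a1 - of_int (j - i) * W \<and> a1 - of_int (j - i) * W < a2 + l2"
      using True i j by (simp add: left_diff_distrib)
    then show ?thesis unfolding st_def by blast
  next
    case False
    have "a1 \<le> a2 - of_int (i - j) * W \<and> a2 - of_int (i - j) * W < a1 + l1"
      using False i j by (simp add: left_diff_distrib)
    then show ?thesis unfolding st_def by blast
  qed
qed

lemma tri_lemma:
  assumes "st W aw au lu" "st W aw av lv" "0 < lw"
  shows "\<exists>c. c \<in> Parc W aw lw \<and> c \<in> Parc W au lu \<and> c \<in> Parc W av lv"
proof -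
  obtain i :: int where i: "au \<le> aw - of_int i * W" "aw - of_int i * W < au + lu"
    using assms(1) unfolding st_def by auto
  obtain j :: int where j: "av \<le> aw - of_int j * W" "aw - of_int j * W < av + lv"
    using assms(2) unfolding st_def by auto
  define e where "e = min lw (min (au + lu - (aw - of_int i * W)) (av + lv - (aw - of_int j * W))) / 2"
  have e: "0 < e" "e < lw" "e < au + lu - (aw - of_int i * W)" "e < av + lv - (aw - of_int j * W)"
    using i j assms(3) unfolding e_def by auto
  have "aw + e \<in> Parc W aw lw"
    unfolding Parc_def using e by (intro CollectI exI[of _ 0]) auto
  moreover have "aw + e \<in> Parc W au lu"
    unfolding Parc_def using e i by (intro CollectI exI[of _ i]) auto
  moreover have "aw + e \<in> Parc W av lv"
    unfolding Parc_def using e j by (intro CollectI exI[of _ j]) auto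
  ultimately show ?thesis by blast
qed

lemma count_arcs:
  fixes V :: "'a set" and a l :: "'a \<Rightarrow> real"
  assumes finV: "finite V" and lpos: "\<forall>v\<in>V. 0 < l v"
    and notri: "\<And>u v w. u\<in>V \<Longrightarrow> v\<in>V \<Longrightarrow> w\<in>V \<Longrightarrow> u\<noteq>v \<Longrightarrow> v\<noteq>w \<Longrightarrow> u\<noteq>w
      \<Longrightarrow> (\<exists>c. c \<in> Parc W (a u) (l u) \<and> c \<in> Parc W (a v) (l v))
      \<Longrightarrow> (\<exists>c. c \<in> Parc W (a v) (l v) \<and> c \<in> Parc W (a w) (l w))
      \<Longrightarrow> (\<exists>c. c \<in> Parc W (a u) (l u) \<and> c \<in> Parc W (a w) (l w)) \<Longrightarrow> False"
  shows "card {{u,v}| u v. u\<in>V \<and> v\<in>V \<and> u\<noteq>v \<and> (\<exists>c. c \<in> Parc W (a u) (l u) \<and> c \<in> Parc W (a v) (l v))} \<le> card V"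
proof -
  define ov where "ov u v = (\<exists>c. c \<in> Parc W (a u) (l u) \<and> c \<in> Parc W (a v) (l v))" for u v
  define S where "S = {{u,v}| u v. u\<in>V \<and> v\<in>V \<and> u\<noteq>v \<and> ov u v}"
  define P where "P e w = (\<exists>z. e = {w,z} \<and> w\<in>V \<and> z\<in>V \<and> w\<noteq>z \<and> ov w z \<and> st W (a w) (a z) (l z))" for e w
  define f where "f e = (SOME w. P e w)" for e
  have ovs: "ov u v \<Longrightarrow> ov v u" for u v unfolding ov_def by blast
  have Pf: "P e (f e)" if eS: "e \<in> S" for e
  proof -
    obtain u v where uv: "e = {u,v}" "u\<in>V" "v\<in>V" "u\<noteq>v" "ov u v" using eS unfolding S_def by blast
    obtain c where "c \<in> Parc W (a u) (l u)" "c \<in> Parc W (a v) (l v)" using uv(5) unfolding ov_def by auto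
    then have "st W (a u) (a v) (l v) \<or> st W (a v) (a u) (l u)" by (rule arc_lemma)
    then have "\<exists>w. P e w"
    proof
      assume "st W (a u) (a v) (l v)" then have "P e u" unfolding P_def using uv by blast
      then show ?thesis by blast
    next
      assume "st W (a v) (a u) (l u)" then have "P e v" unfolding P_def using uv ovs
        by (metis insert_commute)
      then show ?thesis by blast
    qed
    then show ?thesis unfolding f_def by (rule someI_ex)
  qed
  have inj: "inj_on f S"
  proof (rule inj_onI)
    fix e1 e2 assume e: "e1 \<in> S" "e2 \<in> S" "f e1 = f e2"
    define w where "w = f e1"
    obtain z1 where z1: "e1 = {w,z1}" "w\<in>V" "z1\<in>V" "w\<noteq>z1" "ov w z1" "st W (a w) (a z1) (l z1)"
      using Pf[OF e(1)] unfolding P_def w_def by auto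
    obtain z2 where z2: "e2 = {w,z2}" "w\<in>V" "z2\<in>V" "w\<noteq>z2" "ov w z2" "st W (a w) (a z2) (l z2)"
      using Pf[OF e(2)] unfolding P_def w_def e(3) by auto
    show "e1 = e2"
    proof (cases "z1 = z2")
      case True then show ?thesis using z1 z2 by simp
    next
      case False
      obtain c where c: "c \<in> Parc W (a w) (l w)" "c \<in> Parc W (a z1) (l z1)" "c \<in> Parc W (a z2) (l z2)"
        using tri_lemma[OF z1(6) z2(6)] lpos z1(2) by blast
      have "ov z1 z2" unfolding ov_def using c by blast
      then have False using notri[OF z1(2) z1(3) z2(3) z1(4) False z2(4)] z1(5) z2(5) unfolding ov_def by blast
      then show ?thesis ..
    qed
  qed
  have "f ` S \<subseteq> V" using Pf unfolding P_def by blast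
  then have "card S \<le> card V" using card_inj_on_le[OF inj _ finV] by blast
  then show ?thesis unfolding S_def ov_def by simp
qed



lemma rect_int_eq: "rect_interior W H (a,l,b,m) = Parc W a l \<times> Parc H b m"
  unfolding rect_interior_def Parc_def by auto

lemma Parc_shift: "x \<in> Parc W a l \<Longrightarrow> x - of_int k * W \<in> Parc W a l"
proof -
  assume "x \<in> Parc W a l"
  then obtain i :: int where "a < x - of_int i * W" "x - of_int i * W < a + l" unfolding Parc_def by auto
  then have "a < (x - of_int k * W) - of_int (i - k) * W \<and> (x - of_int k * W) - of_int (i - k) * W < a + l"
    by (simp add: left_diff_distrib)
  then show ?thesis unfolding Parc_def by blast
qed

lemma Parc_ne: "0 < l \<Longrightarrow> a + l/2 \<in> Parc W a l"
  unfolding Parc_def by (intro CollectI exI[of _ 0]) auto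

lemma vline_meet:
  assumes "Q \<noteq> {}"
  shows "(vline W c \<inter> (Parc W a l \<times> Q) \<noteq> {}) \<longleftrightarrow> c \<in> Parc W a l"
proof
  assume "vline W c \<inter> (Parc W a l \<times> Q) \<noteq> {}"
  then obtain x y i where "x = c + of_int i * W" "x \<in> Parc W a l" unfolding vline_def by auto
  then show "c \<in> Parc W a l" using Parc_shift[of x W a l i] by simp
next
  assume "c \<in> Parc W a l"
  moreover obtain y where "y \<in> Q" using assms by auto
  ultimately have "(c, y) \<in> vline W c \<inter> (Parc W a l \<times> Q)" unfolding vline_def
    by (auto intro: exI[of _ 0])
  then show "vline W c \<inter> (Parc W a l \<times> Q) \<noteq> {}" by blast
qed

lemma hline_meet:
  assumes "Q \<noteq> {}"
  shows "(hline H c \<inter> (Q \<times> Parc H b m) \<noteq> {}) \<longleftrightarrow> c \<in> Parc H b m"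
proof
  assume "hline H c \<inter> (Q \<times> Parc H b m) \<noteq> {}"
  then obtain y x j where "y = c + of_int j * H" "y \<in> Parc H b m" unfolding hline_def by auto
  then show "c \<in> Parc H b m" using Parc_shift[of y H b m j] by simp
next
  assume "c \<in> Parc H b m"
  moreover obtain x where "x \<in> Q" using assms by auto
  ultimately have "(x, c) \<in> hline H c \<inter> (Q \<times> Parc H b m)" unfolding hline_def
    by (auto intro: exI[of _ 0])
  then show "hline H c \<inter> (Q \<times> Parc H b m) \<noteq> {}" by blast
qed

lemma adj_char:
  assumes "0 < l1" "0 < m1" "0 < l2" "0 < m2"
  shows "(\<exists>c. (hline H c \<inter> rect_interior W H (a1,l1,b1,m1) \<noteq> {} \<and> hline H c \<inter> rect_interior W H (a2,l2,b2,m2) \<noteq> {})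
              \<or> (vline W c \<inter> rect_interior W H (a1,l1,b1,m1) \<noteq> {} \<and> vline W c \<inter> rect_interior W H (a2,l2,b2,m2) \<noteq> {}))
     \<longleftrightarrow> (\<exists>c. c \<in> Parc H b1 m1 \<and> c \<in> Parc H b2 m2) \<or> (\<exists>c. c \<in> Parc W a1 l1 \<and> c \<in> Parc W a2 l2)"
proof -
  have ne: "Parc W a1 l1 \<noteq> {}" "Parc W a2 l2 \<noteq> {}" "Parc H b1 m1 \<noteq> {}" "Parc H b2 m2 \<noteq> {}"
    using Parc_ne assms by blast+
  show ?thesis unfolding rect_int_eq
    using hline_meet[OF ne(1)] hline_meet[OF ne(2)] vline_meet[OF ne(3)] vline_meet[OF ne(4)]
    by (simp add: ex_disj_distrib)
qed

lemma upper_bound: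
  fixes V :: "'a set"
  assumes sg: "simple_graph V E" and bp: "bipartite V E" and tr: "torus_rvg V E"
  shows "card (edges V E) \<le> 2 * card V"
proof -
  obtain W H and R :: "'a \<Rightarrow> rect" where WH: "0 < W" "0 < H"
    and val: "\<forall>v\<in>V. valid_rect W H (R v)"
    and adj: "\<forall>u\<in>V. \<forall>v\<in>V. u \<noteq> v \<longrightarrow>
         (E u v \<longleftrightarrow>
           (\<exists>c. (hline H c \<inter> rect_interior W H (R u) \<noteq> {} \<and> hline H c \<inter> rect_interior W H (R v) \<noteq> {})
              \<or> (vline W c \<inter> rect_interior W H (R u) \<noteq> {} \<and> vline W c \<inter> rect_interior W H (R v) \<noteq> {})))"
    using tr unfolding torus_rvg_def by (elim exE conjE) (rule that)
  define ax where "ax v = fst (R v)" for v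
  define lx where "lx v = fst (snd (R v))" for v
  define ay where "ay v = fst (snd (snd (R v)))" for v
  define ly where "ly v = snd (snd (snd (R v)))" for v
  have Rv: "R v = (ax v, lx v, ay v, ly v)" for v unfolding ax_def lx_def ay_def ly_def by simp
  have pos: "0 < lx v" "0 < ly v" if "v \<in> V" for v
    using val that Rv[of v] unfolding valid_rect_def by auto
  define ovx where "ovx u v = (\<exists>c. c \<in> Parc W (ax u) (lx u) \<and> c \<in> Parc W (ax v) (lx v))" for u v
  define ovy where "ovy u v = (\<exists>c. c \<in> Parc H (ay u) (ly u) \<and> c \<in> Parc H (ay v) (ly v))" for u v
  have Eiff: "E u v \<longleftrightarrow> ovy u v \<or> ovx u v" if "u\<in>V" "v\<in>V" "u\<noteq>v" for u v
    using adj[rule_format, OF that] adj_char[OF pos(1)[OF that(1)] pos(2)[OF that(1)] pos(1)[OF that(2)] pos(2)[OF that(2)]]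
    unfolding ovx_def ovy_def Rv by simp
  obtain A where A: "A \<subseteq> V" "\<forall>u\<in>V. \<forall>v\<in>V. E u v \<longrightarrow> (u \<in> A \<longleftrightarrow> v \<notin> A)"
    using bp unfolding bipartite_def by blast
  have notriE: False if "u\<in>V" "v\<in>V" "w\<in>V" "E u v" "E v w" "E u w" for u v w
    using A(2) that by metis
  have finV: "finite V" using sg unfolding simple_graph_def by blast
  define Sx where "Sx = {{u,v}| u v. u\<in>V \<and> v\<in>V \<and> u\<noteq>v \<and> ovx u v}"
  define Sy where "Sy = {{u,v}| u v. u\<in>V \<and> v\<in>V \<and> u\<noteq>v \<and> ovy u v}"
  have cx: "card Sx \<le> card V" unfolding Sx_def ovx_def
  proof (rule count_arcs[OF finV])
    show "\<forall>v\<in>V. 0 < lx v" using pos by blast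
  next
    fix u v w assume h: "u\<in>V" "v\<in>V" "w\<in>V" "u\<noteq>v" "v\<noteq>w" "u\<noteq>w"
      "\<exists>c. c \<in> Parc W (ax u) (lx u) \<and> c \<in> Parc W (ax v) (lx v)"
      "\<exists>c. c \<in> Parc W (ax v) (lx v) \<and> c \<in> Parc W (ax w) (lx w)"
      "\<exists>c. c \<in> Parc W (ax u) (lx u) \<and> c \<in> Parc W (ax w) (lx w)"
    then have "E u v" "E v w" "E u w" using Eiff[of u v] Eiff[of v w] Eiff[of u w] unfolding ovx_def by auto
    then show False using notriE h(1-3) by blast
  qed
  have cy: "card Sy \<le> card V" unfolding Sy_def ovy_def
  proof (rule count_arcs[OF finV])
    show "\<forall>v\<in>V. 0 < ly v" using pos by blast
  next
    fix u v w assume h: "u\<in>V" "v\<in>V" "w\<in>V" "u\<noteq>v" "v\<noteq>w" "u\<noteq>w"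
      "\<exists>c. c \<in> Parc H (ay u) (ly u) \<and> c \<in> Parc H (ay v) (ly v)"
      "\<exists>c. c \<in> Parc H (ay v) (ly v) \<and> c \<in> Parc H (ay w) (ly w)"
      "\<exists>c. c \<in> Parc H (ay u) (ly u) \<and> c \<in> Parc H (ay w) (ly w)"
    then have "E u v" "E v w" "E u w" using Eiff[of u v] Eiff[of v w] Eiff[of u w] unfolding ovy_def by auto
    then show False using notriE h(1-3) by blast
  qed
  have sub: "edges V E \<subseteq> Sx \<union> Sy"
  proof
    fix e assume "e \<in> edges V E"
    then obtain u v where "e = {u,v}" "u\<in>V" "v\<in>V" "E u v" unfolding edges_def by blast
    moreover then have "u \<noteq> v" using sg unfolding simple_graph_def by blast
    ultimately show "e \<in> Sx \<union> Sy" using Eiff unfolding Sx_def Sy_def by blast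
  qed
  have fin: "finite (Sx \<union> Sy)"
  proof (rule finite_subset[of _ "Pow V"])
    show "Sx \<union> Sy \<subseteq> Pow V" unfolding Sx_def Sy_def by blast
  qed (use finV in simp)
  have "card (edges V E) \<le> card (Sx \<union> Sy)" by (rule card_mono[OF fin sub])
  also have "\<dots> \<le> card Sx + card Sy" by (rule card_Un_le)
  finally show ?thesis using cx cy by simp
qed



definition ovl :: "real \<Rightarrow> real \<Rightarrow> real \<Rightarrow> real \<Rightarrow> real \<Rightarrow> bool" where
  "ovl W a1 l1 a2 l2 = ((a1 < a2 + l2 \<and> a2 < a1 + l1) \<or> (a1 < a2 + W + l2 \<and> a2 + W < a1 + l1)
     \<or> (a1 < a2 - W + l2 \<and> a2 - W < a1 + l1))"

definition cx :: "real \<Rightarrow> nat \<Rightarrow> real" where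
  "cx T v = (if v = 0 then 0 else if v < 8 then 4 * real v + 2 * T else 3 + 2 * real (v - 8))"
definition cl :: "real \<Rightarrow> nat \<Rightarrow> real" where
  "cl T v = (if v = 0 then 6 + 2 * T else if v < 8 then 6 else 1)"
definition cy :: "real \<Rightarrow> nat \<Rightarrow> real" where
  "cy T v = (if v = 5 then 28 + 2 * T else if v < 8 then 4 * real ([0,3,6,1,4,7,2,5::nat] ! v) else 27 + 2 * real (v - 8))"
definition dl :: "real \<Rightarrow> nat \<Rightarrow> real" where
  "dl T v = (if v = 2 then 6 + 2 * T else if v < 8 then 6 else 1)"

lemma lt8: "(u::nat) < 8 \<Longrightarrow> u = 0 \<or> u = 1 \<or> u = 2 \<or> u = 3 \<or> u = 4 \<or> u = 5 \<or> u = 6 \<or> u = 7"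
  by arith

lemma base_cases:
  assumes "u < 8" "v < 8" "u \<noteq> v" "0 \<le> T"
  shows "\<not> (ovl (32+2*T) (cx T u) (cl T u) (cx T v) (cl T v) \<and> ovl (32+2*T) (cy T u) (dl T u) (cy T v) (dl T v))
    \<and> ((ovl (32+2*T) (cx T u) (cl T u) (cx T v) (cl T v) \<or> ovl (32+2*T) (cy T u) (dl T u) (cy T v) (dl T v)) \<longleftrightarrow> odd (u + v))"
  using lt8[OF assms(1)] lt8[OF assms(2)] assms(3,4)
  by (elim disjE) (simp_all add: ovl_def cx_def cl_def cy_def dl_def)

lemma pend_base:
  assumes "v < 8" "0 \<le> j" "j + 1 \<le> T"
  shows "(ovl (32+2*T) (3+2*j) 1 (cx T v) (cl T v) \<longleftrightarrow> v = 0) \<and> (ovl (32+2*T) (27+2*j) 1 (cy T v) (dl T v) \<longleftrightarrow> v = 2)"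
  using lt8[OF assms(1)] assms(2,3)
  by (elim disjE) (auto simp: ovl_def cx_def cl_def cy_def dl_def)

lemma pend_pend:
  assumes "0 \<le> j" "0 \<le> k" "j + 1 \<le> T" "k + 1 \<le> T" "j + 1 \<le> k \<or> k + 1 \<le> j"
  shows "\<not> ovl (32+2*T) (3+2*j) 1 (3+2*k) 1 \<and> \<not> ovl (32+2*T) (27+2*j) 1 (27+2*k) 1"
  using assms by (auto simp: ovl_def)

lemma ovl_sym: "ovl W a1 l1 a2 l2 = ovl W a2 l2 a1 l1"
  unfolding ovl_def by auto

lemma ovl_iff:
  assumes "0 \<le> a1" "a1 < W" "0 \<le> a2" "a2 < W" "0 < l1" "l1 < W" "0 < l2" "l2 < W"
  shows "(\<exists>c. c \<in> Parc W a1 l1 \<and> c \<in> Parc W a2 l2) \<longleftrightarrow> ovl W a1 l1 a2 l2"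
proof
  assume "\<exists>c. c \<in> Parc W a1 l1 \<and> c \<in> Parc W a2 l2"
  then obtain c i j where i: "a1 < c - of_int i * W" "c - of_int i * W < a1 + l1"
    and j: "a2 < c - of_int j * W" "c - of_int j * W < a2 + l2"
    unfolding Parc_def by auto
  define k where "k = j - i"
  have kk: "a1 < a2 + of_int k * W + l2" "a2 + of_int k * W < a1 + l1"
    using i j unfolding k_def by (simp_all add: left_diff_distrib)
  have "(-2) * W < of_int k * W" using kk assms by linarith
  then have "real_of_int (-2) < of_int k" using assms mult_less_cancel_right_pos[of W "-2" "of_int k"] by simp
  then have "-2 < k" by linarith
  moreover have "of_int k * W < 2 * W" using kk assms by linarith
  then have "real_of_int k < of_int 2" using assms mult_less_cancel_right_pos[of W "of_int k" 2] by simp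
  then have "k < 2" by linarith
  ultimately have "k = -1 \<or> k = 0 \<or> k = 1" by arith
  then show "ovl W a1 l1 a2 l2" using kk unfolding ovl_def by auto
next
  assume "ovl W a1 l1 a2 l2"
  then consider (a) "a1 < a2 + l2" "a2 < a1 + l1" | (b) "a1 < a2 + W + l2" "a2 + W < a1 + l1"
    | (c) "a1 < a2 - W + l2" "a2 - W < a1 + l1" unfolding ovl_def by blast
  then show "\<exists>c. c \<in> Parc W a1 l1 \<and> c \<in> Parc W a2 l2"
  proof cases
    case a
    define c where "c = (max a1 a2 + min (a1 + l1) (a2 + l2)) / 2"
    have "c \<in> Parc W a1 l1" unfolding Parc_def using a assms
      by (intro CollectI exI[of _ 0]) (auto simp: c_def min_def max_def field_simps)
    moreover have "c \<in> Parc W a2 l2" unfolding Parc_def using a assms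
      by (intro CollectI exI[of _ 0]) (auto simp: c_def min_def max_def field_simps)
    ultimately show ?thesis by blast
  next
    case b
    define c where "c = (max a1 (a2 + W) + min (a1 + l1) (a2 + W + l2)) / 2"
    have "c \<in> Parc W a1 l1" unfolding Parc_def using b assms
      by (intro CollectI exI[of _ 0]) (auto simp: c_def min_def max_def field_simps)
    moreover have "c \<in> Parc W a2 l2" unfolding Parc_def using b assms
      by (intro CollectI exI[of _ 1]) (auto simp: c_def min_def max_def field_simps)
    ultimately show ?thesis by blast
  next
    case c
    define d where "d = (max a1 (a2 - W) + min (a1 + l1) (a2 - W + l2)) / 2"
    have "d \<in> Parc W a1 l1" unfolding Parc_def using c assms
      by (intro CollectI exI[of _ 0]) (auto simp: d_def min_def max_def field_simps)
    moreover have "d \<in> Parc W a2 l2" unfolding Parc_def using c assms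
      by (intro CollectI exI[of _ "-1"]) (auto simp: d_def min_def max_def field_simps)
    ultimately show ?thesis by blast
  qed
qed



lemma bounds:
  assumes "v < n" "8 \<le> n" "T = real (n - 8)"
  shows "0 \<le> cx T v \<and> cx T v < 32+2*T \<and> 0 < cl T v \<and> cl T v < 32+2*T \<and>
         0 \<le> cy T v \<and> cy T v < 32+2*T \<and> 0 < dl T v \<and> dl T v < 32+2*T"
proof (cases "v < 8")
  case True
  have "0 \<le> T" using assms by simp
  then show ?thesis using lt8[OF True]
    by (elim disjE) (simp_all add: cx_def cl_def cy_def dl_def)
next
  case False
  have "real (v - 8 + 1) \<le> real (n - 8)" using assms False by (intro of_nat_mono) arith
  then have "real (v - 8) + 1 \<le> T" using assms by simp
  then show ?thesis using False by (simp add: cx_def cl_def cy_def dl_def)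
qed

definition E0 :: "nat \<Rightarrow> nat \<Rightarrow> nat \<Rightarrow> bool" where
  "E0 n u v = (u < n \<and> v < n \<and> u \<noteq> v \<and> ((u < 8 \<and> v < 8 \<and> odd (u + v)) \<or> (8 \<le> u \<and> (v = 0 \<or> v = 2)) \<or> (8 \<le> v \<and> (u = 0 \<or> u = 2))))"

lemma key:
  assumes "u < n" "v < n" "u \<noteq> v" "8 \<le> n" "T = real (n - 8)"
  shows "\<not> (ovl (32+2*T) (cx T u) (cl T u) (cx T v) (cl T v) \<and> ovl (32+2*T) (cy T u) (dl T u) (cy T v) (dl T v))
    \<and> ((ovl (32+2*T) (cx T u) (cl T u) (cx T v) (cl T v) \<or> ovl (32+2*T) (cy T u) (dl T u) (cy T v) (dl T v)) \<longleftrightarrow> E0 n u v)"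
proof -
  have T0: "0 \<le> T" using assms by simp
  have jb: "real (w - 8) + 1 \<le> T" if "w < n" "\<not> w < 8" for w
  proof -
    have "real (w - 8 + 1) \<le> real (n - 8)" using assms that by (intro of_nat_mono) arith
    then show ?thesis using assms by simp
  qed
  have pu: "cx T w = 3 + 2 * real (w - 8)" "cl T w = 1" "cy T w = 27 + 2 * real (w - 8)" "dl T w = 1"
    if "\<not> w < 8" for w using that by (auto simp: cx_def cl_def cy_def dl_def)
  show ?thesis
  proof (cases "u < 8")
    case u: True
    show ?thesis
    proof (cases "v < 8")
      case True
      then show ?thesis using base_cases[OF u True assms(3) T0] assms u True unfolding E0_def by simp
    next
      case False
      have "(ovl (32+2*T) (3+2*real (v-8)) 1 (cx T u) (cl T u) \<longleftrightarrow> u = 0) \<and> (ovl (32+2*T) (27+2*real (v-8)) 1 (cy T u) (dl T u) \<longleftrightarrow> u = 2)"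
        by (rule pend_base[OF u]) (use jb[OF assms(2) False] in auto)
      then show ?thesis using False u assms pu[OF False] ovl_sym unfolding E0_def by auto
    qed
  next
    case u: False
    show ?thesis
    proof (cases "v < 8")
      case True
      have "(ovl (32+2*T) (3+2*real (u-8)) 1 (cx T v) (cl T v) \<longleftrightarrow> v = 0) \<and> (ovl (32+2*T) (27+2*real (u-8)) 1 (cy T v) (dl T v) \<longleftrightarrow> v = 2)"
        by (rule pend_base[OF True]) (use jb[OF assms(1) u] in auto)
      then show ?thesis using True u assms pu[OF u] unfolding E0_def by auto
    next
      case False
      have "u - 8 + 1 \<le> v - 8 \<or> v - 8 + 1 \<le> u - 8" using u False assms(3) by arith
      then have d: "real (u - 8) + 1 \<le> real (v - 8) \<or> real (v - 8) + 1 \<le> real (u - 8)"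
        by (metis of_nat_1 of_nat_add of_nat_le_iff)
      have "\<not> ovl (32+2*T) (3+2*real (u-8)) 1 (3+2*real (v-8)) 1 \<and> \<not> ovl (32+2*T) (27+2*real (u-8)) 1 (27+2*real (v-8)) 1"
        by (rule pend_pend) (use jb[OF assms(1) u] jb[OF assms(2) False] d in auto)
      then show ?thesis using False u assms pu[OF u] pu[OF False] unfolding E0_def by auto
    qed
  qed
qed



lemma card_E0:
  assumes "8 \<le> n"
  shows "card (edges {..<n} (E0 n)) = 2 * n"
proof -
  define S where "S = {(u,v). u < v \<and> E0 n u v}"
  have symE: "E0 n u v \<Longrightarrow> E0 n v u" for u v unfolding E0_def by (auto simp: add.commute)
  have eq: "edges {..<n} (E0 n) = (\<lambda>(u,v). {u,v}) ` S"
  proof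
    show "edges {..<n} (E0 n) \<subseteq> (\<lambda>(u,v). {u,v}) ` S"
    proof
      fix e assume "e \<in> edges {..<n} (E0 n)"
      then obtain u v where uv: "e = {u,v}" "E0 n u v" unfolding edges_def by blast
      then have "u \<noteq> v" unfolding E0_def by simp
      show "e \<in> (\<lambda>(u,v). {u,v}) ` S"
      proof (cases "u < v")
        case True then show ?thesis using uv unfolding S_def by force
      next
        case False
        then have "(v,u) \<in> S" using uv symE \<open>u \<noteq> v\<close> unfolding S_def by auto
        then show ?thesis using uv by (force simp: insert_commute)
      qed
    qed
  next
    show "(\<lambda>(u,v). {u,v}) ` S \<subseteq> edges {..<n} (E0 n)"
    proof
      fix e assume "e \<in> (\<lambda>(u,v). {u,v}) ` S"
      then obtain u v where uv: "e = {u,v}" "E0 n u v" unfolding S_def by auto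
      then have "u < n" "v < n" unfolding E0_def by auto
      then show "e \<in> edges {..<n} (E0 n)" using uv unfolding edges_def by blast
    qed
  qed
  have inj: "inj_on (\<lambda>(u,v). {u,v}) S"
    unfolding S_def by (rule inj_onI) (auto simp: doubleton_eq_iff)
  define S8 where "S8 = {(0::nat,1::nat),(0,3),(0,5),(0,7),(1,2),(1,4),(1,6),(2,3),(2,5),(2,7),(3,4),(3,6),(4,5),(4,7),(5,6),(6,7)}"
  define P0 where "P0 = (\<lambda>j. (0::nat, j)) ` {8..<n}"
  define P2 where "P2 = (\<lambda>j. (2::nat, j)) ` {8..<n}"
  have Seq: "S = S8 \<union> P0 \<union> P2"
  proof
    show "S \<subseteq> S8 \<union> P0 \<union> P2"
    proof
      fix p assume "p \<in> S"
      then obtain u v where p: "p = (u,v)" "u < v" "E0 n u v" unfolding S_def by blast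
      show "p \<in> S8 \<union> P0 \<union> P2"
      proof (cases "v < 8")
        case True
        then have "u < 8" using p by simp
        then show ?thesis using lt8[OF True] lt8[OF \<open>u < 8\<close>] p unfolding S8_def E0_def
          by (elim disjE) simp_all
      next
        case False
        then have "u = 0 \<or> u = 2" "v < n" using p unfolding E0_def by auto
        then show ?thesis using p False unfolding P0_def P2_def by auto
      qed
    qed
  next
    show "S8 \<union> P0 \<union> P2 \<subseteq> S"
      unfolding S8_def P0_def P2_def S_def E0_def using assms by auto
  qed
  have c8: "card S8 = 16" unfolding S8_def by simp
  have cP0: "card P0 = n - 8" unfolding P0_def by (subst card_image) (auto simp: inj_on_def)
  have cP2: "card P2 = n - 8" unfolding P2_def by (subst card_image) (auto simp: inj_on_def)
  have d1: "S8 \<inter> P0 = {}" unfolding S8_def P0_def by auto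
  have d2: "(S8 \<union> P0) \<inter> P2 = {}" unfolding S8_def P0_def P2_def by auto
  have f: "finite S8" "finite P0" "finite P2" unfolding S8_def P0_def P2_def by auto
  have "card S = 16 + (n - 8) + (n - 8)"
    unfolding Seq using card_Un_disjoint[OF _ _ d2] card_Un_disjoint[OF _ _ d1] f c8 cP0 cP2 by simp
  then have "card S = 2 * n" using assms by simp
  then show ?thesis unfolding eq using card_image[OF inj] by simp
qed

lemma construction:
  assumes n: "8 \<le> n"
  shows "\<exists>(V :: nat set) E. simple_graph V E \<and> card V = n \<and>
            bipartite V E \<and> torus_rvg V E \<and> card (edges V E) = 2 * n"
proof (intro exI conjI)
  show "simple_graph {..<n} (E0 n)" unfolding simple_graph_def E0_def by (auto simp: add.commute)
  show "card {..<n} = n" by simp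
  show "bipartite {..<n} (E0 n)" unfolding bipartite_def
    by (rule exI[of _ "{v. v < n \<and> v < 8 \<and> even v}"]) (auto simp: E0_def)
  show "card (edges {..<n} (E0 n)) = 2 * n" by (rule card_E0[OF n])
  define T where "T = real (n - 8)"
  define W where "W = 32 + 2 * T"
  define R where "R v = (cx T v, cl T v, cy T v, dl T v)" for v
  have T0: "0 \<le> T" unfolding T_def by simp
  have bd: "0 \<le> cx T v \<and> cx T v < W \<and> 0 < cl T v \<and> cl T v < W \<and>
         0 \<le> cy T v \<and> cy T v < W \<and> 0 < dl T v \<and> dl T v < W" if "v < n" for v
    using bounds[OF that n T_def] unfolding W_def .
  have ox: "(\<exists>c. c \<in> Parc W (cx T u) (cl T u) \<and> c \<in> Parc W (cx T v) (cl T v)) \<longleftrightarrow> ovl W (cx T u) (cl T u) (cx T v) (cl T v)"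
    if "u < n" "v < n" for u v
    using bd[OF that(1)] bd[OF that(2)] by (intro ovl_iff) auto
  have oy: "(\<exists>c. c \<in> Parc W (cy T u) (dl T u) \<and> c \<in> Parc W (cy T v) (dl T v)) \<longleftrightarrow> ovl W (cy T u) (dl T u) (cy T v) (dl T v)"
    if "u < n" "v < n" for u v
    using bd[OF that(1)] bd[OF that(2)] by (intro ovl_iff) auto
  have k: "\<not> (ovl W (cx T u) (cl T u) (cx T v) (cl T v) \<and> ovl W (cy T u) (dl T u) (cy T v) (dl T v))
    \<and> ((ovl W (cx T u) (cl T u) (cx T v) (cl T v) \<or> ovl W (cy T u) (dl T u) (cy T v) (dl T v)) \<longleftrightarrow> E0 n u v)"
    if "u < n" "v < n" "u \<noteq> v" for u v
    using key[OF that n T_def] unfolding W_def .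
  show "torus_rvg {..<n} (E0 n)" unfolding torus_rvg_def
  proof (intro exI[of _ W] exI[of _ W] exI[of _ R] conjI ballI impI)
    show "0 < W" "0 < W" unfolding W_def using T0 by auto
    show "valid_rect W W (R v)" if "v \<in> {..<n}" for v
      using bd[of v] that unfolding valid_rect_def R_def by auto
    show "rect_interior W W (R u) \<inter> rect_interior W W (R v) = {}"
      if "u \<in> {..<n}" "v \<in> {..<n}" "u \<noteq> v" for u v
    proof -
      have "\<not> ((\<exists>c. c \<in> Parc W (cx T u) (cl T u) \<and> c \<in> Parc W (cx T v) (cl T v)) \<and>
               (\<exists>c. c \<in> Parc W (cy T u) (dl T u) \<and> c \<in> Parc W (cy T v) (dl T v)))"
        using k[of u v] ox[of u v] oy[of u v] that by auto
      then show ?thesis unfolding R_def rect_int_eq by blast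
    qed
    show "E0 n u v \<longleftrightarrow>
           (\<exists>c. (hline W c \<inter> rect_interior W W (R u) \<noteq> {} \<and> hline W c \<inter> rect_interior W W (R v) \<noteq> {})
              \<or> (vline W c \<inter> rect_interior W W (R u) \<noteq> {} \<and> vline W c \<inter> rect_interior W W (R v) \<noteq> {}))"
      if "u \<in> {..<n}" "v \<in> {..<n}" "u \<noteq> v" for u v
    proof -
      have p: "0 < cl T u" "0 < dl T u" "0 < cl T v" "0 < dl T v" using bd[of u] bd[of v] that by auto
      show ?thesis unfolding R_def adj_char[OF p]
        using k[of u v] ox[of u v] oy[of u v] that by auto
    qed
  qed
qed


theorem theorem4:
  shows "(\<forall>(V :: 'a set) E. simple_graph V E \<and> bipartite V E \<and> torus_rvg V E
            \<longrightarrow> card (edges V E) \<le> 2 * card V)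
       \<and> (\<forall>n::nat. n \<ge> 8 \<longrightarrow> (\<exists>(V :: nat set) E. simple_graph V E \<and> card V = n \<and>
            bipartite V E \<and> torus_rvg V E \<and> card (edges V E) = 2 * n))"
  using upper_bound construction by blast

end
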